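(* If $A=(A_n)_{n=0}^\infty$ is an Appell sequence and $\lambda$ is an integer partition, then \[ \varphi_A(s_\lambda) = \frac{A_\lambda}{H(\lambda)} = \frac{F_\lambda A_\lambda}{\lvert \lambda \rvert!}. \]
   Context: An Appell sequence is a sequence of polynomials $(A_n)_{n\ge0}$ with $A_0=1$ and $A_n'=nA_{n-1}$ for $n\ge1$. For a partition $\lambda=(\lambda_1\ge\dots\ge\lambda_r>0)$ of length $r$, let $(n_1,\dots,n_r)=(\lambda_r,\lambda_{r-1}+1,\dots,\lambda_1+r-1)$ and define the Wronskian Appell polynomial $A_\lambda=\operatorname{Wr}[A_{n_1},\dots,A_{n_r}]/\Delta(n_1,\dots,n_r)$, where $\operatorname{Wr}$ is the Wronskian determinant and $\Delta(x_1,\dots,x_r)=\prod_{i<j}(x_j-x_i)$ is the Vandermonde determinant ($A_\emptyset=1$). $\Lambda$ is the ring of symmetric functions, $h_m$ the complete homogeneous symmetric functions, $s_\lambda$ the Schur functions, and $\varphi_A:\Lambda\to\mathbb{R}[x]$ is the ring homomorphism defined by $\varphi_A(h_m)=A_m/m!$ for $m\ge1$. $H(\lambda)$ is the product of the hook lengths of $\lambda$ and $F_\lambda$ is the number of standard Young tableaux of shape $\lambda$; $|\lambda|$ is the size of $\lambda$. *)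

theory Defs
  imports "HOL-Computational_Algebra.Polynomial" "Jordan_Normal_Form.Determinant"
begin

definition appell :: "(nat \<Rightarrow> real poly) \<Rightarrow> bool" where
  "appell A \<longleftrightarrow> A 0 = 1 \<and> (\<forall>n\<ge>1. pderiv (A n) = smult (real n) (A (n - 1)))"

definition partition :: "nat list \<Rightarrow> bool" where
  "partition lam \<longleftrightarrow> sorted_wrt (\<ge>) lam \<and> (\<forall>x\<in>set lam. 0 < x)"

definition psize :: "nat list \<Rightarrow> nat" where
  "psize lam = sum_list lam"

text \<open>Cells of the Young diagram, 0-indexed (row i, column j).\<close>
definition cells :: "nat list \<Rightarrow> (nat \<times> nat) set" where
  "cells lam = {(i, j). i < length lam \<and> j < lam ! i}"

definition conj_part :: "nat list \<Rightarrow> nat \<Rightarrow> nat" where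
  "conj_part lam j = card {k. k < length lam \<and> j < lam ! k}"

definition hook_length :: "nat list \<Rightarrow> nat \<Rightarrow> nat \<Rightarrow> nat" where
  "hook_length lam i j = (lam ! i - j) + (conj_part lam j - i) - 1"

definition hook_product :: "nat list \<Rightarrow> nat" where
  "hook_product lam = (\<Prod>c\<in>cells lam. hook_length lam (fst c) (snd c))"

definition SYT :: "nat list \<Rightarrow> ((nat \<times> nat) \<Rightarrow> nat) set" where
  "SYT lam = {T. T \<in> extensional (cells lam) \<and> bij_betw T (cells lam) {1..psize lam}
     \<and> (\<forall>i j. (i, Suc j) \<in> cells lam \<longrightarrow> T (i, j) < T (i, Suc j))
     \<and> (\<forall>i j. (Suc i, j) \<in> cells lam \<longrightarrow> T (i, j) < T (Suc i, j))}"

definition num_SYT :: "nat list \<Rightarrow> nat" where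
  "num_SYT lam = card (SYT lam)"

text \<open>The shifted parts (n_1,...,n_r) = (lam_r, lam_{r-1}+1, ..., lam_1+r-1), 0-indexed.\<close>
definition shifted_parts :: "nat list \<Rightarrow> nat \<Rightarrow> nat" where
  "shifted_parts lam i = lam ! (length lam - 1 - i) + i"

definition wronskian :: "nat \<Rightarrow> (nat \<Rightarrow> real poly) \<Rightarrow> real poly" where
  "wronskian r f = det (mat r r (\<lambda>(i, j). (pderiv ^^ i) (f j)))"

definition vandermonde :: "nat \<Rightarrow> (nat \<Rightarrow> nat) \<Rightarrow> real" where
  "vandermonde r x = (\<Prod>j<r. \<Prod>i<j. (real (x j) - real (x i)))"

definition wronskian_appell :: "(nat \<Rightarrow> real poly) \<Rightarrow> nat list \<Rightarrow> real poly" where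
  "wronskian_appell A lam =
     smult (1 / vandermonde (length lam) (shifted_parts lam))
       (wronskian (length lam) (\<lambda>j. A (shifted_parts lam j)))"

text \<open>Image of h_m under phi_A (h_0 = 1, h_m = 0 for m < 0).\<close>
definition phi_h :: "(nat \<Rightarrow> real poly) \<Rightarrow> int \<Rightarrow> real poly" where
  "phi_h A m = (if m < 0 then 0 else if m = 0 then 1
                else smult (1 / fact (nat m)) (A (nat m)))"

text \<open>phi_A(s_lam), where s_lam is given by the Jacobi-Trudi determinant
  s_lam = det (h_{lam_i - i + j})_{i,j}, and phi_A is a ring homomorphism.\<close>
definition phi_schur :: "(nat \<Rightarrow> real poly) \<Rightarrow> nat list \<Rightarrow> real poly" where
  "phi_schur A lam = det (mat (length lam) (length lam)
     (\<lambda>(i, j). phi_h A (int (lam ! i) - int i + int j)))"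

end

theory Submission
  imports Defs
begin

definition VV :: "nat \<Rightarrow> (nat \<Rightarrow> real) \<Rightarrow> real" where
  "VV r x = (\<Prod>j<r. \<Prod>i<j. (x j - x i))"

lemma VV_Suc: "VV (Suc r) x = VV r x * (\<Prod>i<r. (x r - x i))"
  by (simp add: VV_def)

lemma VV_cong: "(\<And>k. k < r \<Longrightarrow> x k = y k) \<Longrightarrow> VV r x = VV r y"
  unfolding VV_def by (intro prod.cong refl) auto

lemma VV_upd: "i < r \<Longrightarrow>
  VV r (x(i := c)) * (\<Prod>j\<in>{..<r}-{i}. (x i - x j)) = VV r x * (\<Prod>j\<in>{..<r}-{i}. (c - x j))"
proof (induction r)
  case 0 then show ?case by simp
next
  case (Suc r)
  show ?case
  proof (cases "i = r")
    case True
    have e: "{..<Suc r} - {i} = {..<r}" using True by auto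
    have "VV r (x(i := c)) = VV r x" by (rule VV_cong) (use True in auto)
    moreover have "(\<Prod>k<r. ((x(i := c)) r - (x(i := c)) k)) = (\<Prod>k<r. (c - x k))"
      using True by (intro prod.cong) auto
    ultimately show ?thesis unfolding VV_Suc e using True by (simp add: ac_simps)
  next
    case False
    with Suc have ir: "i < r" by auto
    have e: "{..<Suc r} - {i} = insert r ({..<r} - {i})" using ir by auto
    have T: "(\<Prod>k<r. ((x(i := c)) r - (x(i := c)) k)) = (x r - c) * (\<Prod>k\<in>{..<r}-{i}. (x r - x k))"
    proof -
      have "(\<Prod>k<r. ((x(i := c)) r - (x(i := c)) k)) = (x r - c) * (\<Prod>k\<in>{..<r}-{i}. ((x(i := c)) r - (x(i := c)) k))"
        using ir False by (subst prod.remove[of _ i]) auto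
      also have "(\<Prod>k\<in>{..<r}-{i}. ((x(i := c)) r - (x(i := c)) k)) = (\<Prod>k\<in>{..<r}-{i}. (x r - x k))"
        using False by (intro prod.cong) auto
      finally show ?thesis .
    qed
    have T2: "(\<Prod>k<r. (x r - x k)) = (x r - x i) * (\<Prod>k\<in>{..<r}-{i}. (x r - x k))"
      using ir by (subst prod.remove[of _ i]) auto
    have IH: "VV r (x(i := c)) * (\<Prod>j\<in>{..<r}-{i}. (x i - x j)) = VV r x * (\<Prod>j\<in>{..<r}-{i}. (c - x j))"
      using Suc.IH ir by blast
    have "VV (Suc r) (x(i := c)) * (\<Prod>j\<in>{..<Suc r}-{i}. (x i - x j))
        = (VV r (x(i := c)) * (\<Prod>j\<in>{..<r}-{i}. (x i - x j))) * ((x r - c) * (x i - x r) * (\<Prod>k\<in>{..<r}-{i}. (x r - x k)))"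
      unfolding VV_Suc e T by (simp add: ac_simps)
    also have "\<dots> = (VV r x * (\<Prod>j\<in>{..<r}-{i}. (c - x j))) * ((x r - x i) * (c - x r) * (\<Prod>k\<in>{..<r}-{i}. (x r - x k)))"
      unfolding IH by (simp add: algebra_simps)
    also have "\<dots> = VV (Suc r) x * (\<Prod>j\<in>{..<Suc r}-{i}. (c - x j))"
      unfolding VV_Suc e T2 by (simp add: ac_simps)
    finally show ?thesis .
  qed
qed

lemma VV_zero: assumes "a < b" "b < r" "x a = x b" shows "VV r x = 0"
proof -
  have 1: "a \<in> {..<b}" "x b - x a = 0" using assms by auto
  have 2: "(\<Prod>i<b. (x b - x i)) = 0" apply (rule prod_zero) apply simp using 1 by blast
  have 3: "b \<in> {..<r}" using assms by auto
  show ?thesis unfolding VV_def apply (rule prod_zero) apply simp using 2 3 by blast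
qed

lemma VV_nonzero: assumes "inj_on x {..<r}" shows "VV r x \<noteq> 0"
proof -
  have "x j - x i \<noteq> 0" if "i < j" "j < r" for i j
  proof
    assume "x j - x i = 0"
    then have "x j = x i" by simp
    moreover have "i \<in> {..<r}" "j \<in> {..<r}" using that by auto
    ultimately have "j = i" using assms by (simp add: inj_on_eq_iff)
    then show False using that by simp
  qed
  then show ?thesis unfolding VV_def by (auto simp: prod_zero_iff)
qed

definition e2 :: "'a set \<Rightarrow> ('a \<Rightarrow> real) \<Rightarrow> real" where
  "e2 S a = ((sum a S)^2 - (\<Sum>j\<in>S. (a j)^2)) / 2"

lemma linprod_coeffs:
  fixes a :: "'a \<Rightarrow> real"
  assumes "finite S"
  shows "degree (\<Prod>j\<in>S. [:- a j, 1:]) \<le> card S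
     \<and> coeff (\<Prod>j\<in>S. [:- a j, 1:]) (card S) = 1
     \<and> (\<forall>k. card S = Suc k \<longrightarrow> coeff (\<Prod>j\<in>S. [:- a j, 1:]) k = - sum a S)
     \<and> (\<forall>k. card S = Suc (Suc k) \<longrightarrow> coeff (\<Prod>j\<in>S. [:- a j, 1:]) k = e2 S a)"
  using assms
proof (induction S rule: finite_induct)
  case empty
  then show ?case by simp
next
  case (insert b T)
  let ?F = "\<Prod>j\<in>T. [:- a j, 1:]"
  have P: "(\<Prod>j\<in>insert b T. [:- a j, 1:]) = smult (- a b) ?F + pCons 0 ?F"
    using insert by simp
  have cS: "card (insert b T) = Suc (card T)" using insert by simp
  have c0: "coeff (\<Prod>j\<in>insert b T. [:- a j, 1:]) 0 = - a b * coeff ?F 0"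
    unfolding P by simp
  have cS': "\<And>m. coeff (\<Prod>j\<in>insert b T. [:- a j, 1:]) (Suc m) = - a b * coeff ?F (Suc m) + coeff ?F m"
    unfolding P by simp
  have hi: "coeff ?F (Suc (card T)) = 0"
    using insert.IH by (intro coeff_eq_0) auto
  have deg: "degree (\<Prod>j\<in>insert b T. [:- a j, 1:]) \<le> card (insert b T)"
  proof -
    have "degree (smult (- a b) ?F) \<le> Suc (card T)" using insert.IH
      by (meson degree_smult_le le_SucI order_trans)
    moreover have "degree (pCons 0 ?F) \<le> Suc (card T)" using insert.IH
      by (metis Suc_le_mono degree_pCons_le order_trans)
    ultimately show ?thesis unfolding P cS by (meson degree_add_le)
  qed
  have lead: "coeff (\<Prod>j\<in>insert b T. [:- a j, 1:]) (card (insert b T)) = 1"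
    unfolding cS cS' using hi insert.IH by simp
  have sub1: "\<forall>k. card (insert b T) = Suc k \<longrightarrow> coeff (\<Prod>j\<in>insert b T. [:- a j, 1:]) k = - sum a (insert b T)"
  proof (intro allI impI)
    fix k assume k: "card (insert b T) = Suc k"
    then have kT: "card T = k" using cS by simp
    show "coeff (\<Prod>j\<in>insert b T. [:- a j, 1:]) k = - sum a (insert b T)"
    proof (cases k)
      case 0
      then have "T = {}" using kT insert by auto
      then show ?thesis using 0 by simp
    next
      case (Suc m)
      then show ?thesis unfolding cS' using insert kT by simp
    qed
  qed
  have sub2: "\<forall>k. card (insert b T) = Suc (Suc k) \<longrightarrow> coeff (\<Prod>j\<in>insert b T. [:- a j, 1:]) k = e2 (insert b T) a"
  proof (intro allI impI)
    fix k assume k: "card (insert b T) = Suc (Suc k)"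
    then have kT: "card T = Suc k" using cS by simp
    have e2i: "e2 (insert b T) a = e2 T a + a b * sum a T"
      unfolding e2_def using insert by (simp add: power2_eq_square field_simps)
    show "coeff (\<Prod>j\<in>insert b T. [:- a j, 1:]) k = e2 (insert b T) a"
    proof (cases k)
      case 0
      then obtain c where "T = {c}" using kT card_1_singletonE by auto
      then show ?thesis using 0 c0 insert unfolding e2i by (simp add: e2_def)
    next
      case (Suc m)
      then show ?thesis unfolding cS' e2i using insert kT by simp
    qed
  qed
  show ?case using deg lead sub1 sub2 by blast
qed

lemma poly_linprod: fixes a :: "'a \<Rightarrow> real" shows "poly (\<Prod>j\<in>S. [:- a j, 1:]) z = (\<Prod>j\<in>S. (z - a j))"
  unfolding poly_prod by (intro prod.cong) (simp_all add: algebra_simps)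

lemma linprod_deg: fixes a :: "'a \<Rightarrow> real" shows "finite S \<Longrightarrow> degree (\<Prod>j\<in>S. [:- a j, 1:]) \<le> card S"
  using linprod_coeffs[of S a] by blast
lemma linprod_lead: fixes a :: "'a \<Rightarrow> real" shows "finite S \<Longrightarrow> coeff (\<Prod>j\<in>S. [:- a j, 1:]) (card S) = 1"
  using linprod_coeffs[of S a] by blast
lemma linprod_sub1: fixes a :: "'a \<Rightarrow> real" shows "finite S \<Longrightarrow> card S = Suc k \<Longrightarrow> coeff (\<Prod>j\<in>S. [:- a j, 1:]) k = - sum a S"
  using linprod_coeffs[of S a] by blast
lemma linprod_sub2: fixes a :: "'a \<Rightarrow> real" shows "finite S \<Longrightarrow> card S = Suc (Suc k) \<Longrightarrow> coeff (\<Prod>j\<in>S. [:- a j, 1:]) k = e2 S a"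
  using linprod_coeffs[of S a] by blast

lemma lagrange_key:
  fixes x :: "nat \<Rightarrow> real"
  assumes inj: "inj_on x {..<r}"
  shows "(\<Sum>i<r. x i * ((\<Prod>j\<in>{..<r}-{i}. (x i - 1 - x j)) / (\<Prod>j\<in>{..<r}-{i}. (x i - x j))))
         = sum x {..<r} - real r * (real r - 1) / 2"
proof -
  define f where "f = (\<lambda>i. (\<Prod>j\<in>{..<r}-{i}. (x i - 1 - x j)) / (\<Prod>j\<in>{..<r}-{i}. (x i - x j)))"
  have den: "(\<Prod>j\<in>{..<r}-{i}. (x i - x j)) \<noteq> 0" if "i < r" for i
    using inj that by (auto simp: inj_on_def)
  consider "r = 0" | "r = 1" | m where "r = Suc (Suc m)"
    by (metis One_nat_def not0_implies_Suc)
  then show ?thesis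
  proof cases
    case 1 then show ?thesis by simp
  next
    case 2 then show ?thesis by simp
  next
    case 3
    define p where "p = (\<Prod>j<r. [:- (x j + 1), 1:])"
    define N where "N = (\<lambda>i. \<Prod>j\<in>{..<r}-{i}. [:- x j, 1:])"
    define q where "q = (\<Prod>j<r. [:- x j, 1:]) - (\<Sum>i<r. smult (f i) (N i))"
    have cr: "card {..<r} = Suc (Suc m)" using 3 by simp
    have cN: "card ({..<r}-{i}) = Suc m" if "i < r" for i using 3 that by simp
    have Lp12: "degree p \<le> r" "coeff p r = 1"
      unfolding p_def
      using linprod_deg[of "{..<r}" "\<lambda>j. x j + 1"] linprod_lead[of "{..<r}" "\<lambda>j. x j + 1"] by simp_all
    have Lp3: "coeff p (Suc m) = - (\<Sum>j<r. (x j + 1))"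
      unfolding p_def by (rule linprod_sub1[OF finite_lessThan cr, where a = "\<lambda>j. x j + 1"])
    have Lp4: "coeff p m = e2 {..<r} (\<lambda>j. x j + 1)"
      unfolding p_def by (rule linprod_sub2[OF finite_lessThan cr, where a = "\<lambda>j. x j + 1"])
    note Lp = Lp12 Lp3 Lp4
    have Lx12: "degree (\<Prod>j<r. [:- x j, 1:]) \<le> r" "coeff (\<Prod>j<r. [:- x j, 1:]) r = 1"
      using linprod_deg[of "{..<r}" x] linprod_lead[of "{..<r}" x] by simp_all
    have Lx3: "coeff (\<Prod>j<r. [:- x j, 1:]) (Suc m) = - (\<Sum>j<r. x j)"
      by (rule linprod_sub1[OF finite_lessThan cr, where a = x])
    have Lx4: "coeff (\<Prod>j<r. [:- x j, 1:]) m = e2 {..<r} x"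
      by (rule linprod_sub2[OF finite_lessThan cr, where a = x])
    note Lx = Lx12 Lx3 Lx4
    have LN: "degree (N i) \<le> Suc m \<and> coeff (N i) (Suc m) = 1 \<and> coeff (N i) m = - sum x ({..<r}-{i})"
      if "i < r" for i
      unfolding N_def using linprod_deg[of "{..<r}-{i}" x] linprod_lead[of "{..<r}-{i}" x]
        linprod_sub1[of "{..<r}-{i}" m x] cN[OF that] by auto
    have degsum: "degree (\<Sum>i<r. smult (f i) (N i)) \<le> r"
    proof (rule degree_sum_le)
      fix i assume "i \<in> {..<r}"
      then have "degree (N i) \<le> r" using LN[of i] 3 by auto
      then show "degree (smult (f i) (N i)) \<le> r" by (meson degree_smult_le order_trans)
    qed simp
    have pq: "p = q"
    proof (rule poly_eqI_degree_lead_coeff[where n = r and A = "x ` {..<r}"])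
      have "coeff (\<Sum>i<r. smult (f i) (N i)) r = 0"
      proof -
        have "coeff (N i) r = 0" if "i < r" for i
          using LN[OF that] 3 by (intro coeff_eq_0) auto
        then show ?thesis unfolding coeff_sum by (intro sum.neutral) auto
      qed
      then show "coeff p r = coeff q r" unfolding q_def coeff_diff using Lp(2) Lx(2) by simp
      show "r \<le> card (x ` {..<r})" using card_image[OF inj] by simp
      show "degree p \<le> r" using Lp by simp
      show "degree q \<le> r" unfolding q_def using Lx degsum
        by (metis degree_diff_le)
      fix z assume "z \<in> x ` {..<r}"
      then obtain k where k: "k < r" "z = x k" by auto
      have pz: "poly p z = - (\<Prod>j\<in>{..<r}-{k}. (x k - 1 - x j))"
      proof -
        have "poly p z = (\<Prod>j<r. (x k - (x j + 1)))"
          unfolding p_def poly_linprod k(2) by simp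
        also have "\<dots> = (x k - (x k + 1)) * (\<Prod>j\<in>{..<r}-{k}. (x k - (x j + 1)))"
          using k(1) by (subst prod.remove[of _ k]) auto
        also have "\<dots> = - (\<Prod>j\<in>{..<r}-{k}. (x k - 1 - x j))"
          by (simp add: algebra_simps)
        finally show ?thesis .
      qed
      have z1: "(\<Prod>j<r. (z - x j)) = 0" using k by (intro prod_zero) auto
      have z2: "(\<Sum>i<r. f i * poly (N i) z) = f k * poly (N k) z"
      proof -
        have "(\<Sum>i<r. f i * poly (N i) z) = f k * poly (N k) z + (\<Sum>i\<in>{..<r}-{k}. f i * poly (N i) z)"
          using k by (simp add: sum.remove)
        moreover have "(\<Sum>i\<in>{..<r}-{k}. f i * poly (N i) z) = 0"
          unfolding N_def poly_linprod using k by (auto intro!: sum.neutral prod_zero)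
        ultimately show ?thesis by simp
      qed
      have z3: "f k * poly (N k) z = (\<Prod>j\<in>{..<r}-{k}. (x k - 1 - x j))"
        unfolding f_def N_def poly_linprod k(2) using den[OF k(1)] by simp
      show "poly p z = poly q z"
        unfolding q_def poly_diff poly_sum poly_smult poly_linprod z1 z2 z3 pz by simp
    qed
    have c1: "coeff p (Suc m) = coeff q (Suc m)" using pq by (rule arg_cong)
    have c2: "coeff p m = coeff q m" using pq by (rule arg_cong)
    have cs: "coeff (\<Sum>i<r. smult (f i) (N i)) (Suc m) = (\<Sum>i<r. f i)"
      unfolding coeff_sum coeff_smult
    proof (intro sum.cong refl)
      fix i assume "i \<in> {..<r}"
      then have "coeff (N i) (Suc m) = 1" using LN[of i] by simp
      then show "f i * coeff (N i) (Suc m) = f i" by simp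
    qed
    have "- (\<Sum>j<r. (x j + 1)) = - (\<Sum>j<r. x j) - (\<Sum>i<r. f i)"
      using c1 unfolding q_def coeff_diff Lp3 Lx3 cs .
    then have sumf: "(\<Sum>i<r. f i) = real r" by (simp add: sum.distrib)
    have cs2: "coeff (\<Sum>i<r. smult (f i) (N i)) m = (\<Sum>i<r. f i * (x i - sum x {..<r}))"
      unfolding coeff_sum coeff_smult
    proof (intro sum.cong refl)
      fix i assume "i \<in> {..<r}"
      then have "coeff (N i) m = - sum x ({..<r}-{i})" using LN[of i] by simp
      also have "\<dots> = x i - sum x {..<r}" using \<open>i \<in> {..<r}\<close> by (simp add: sum_diff1)
      finally show "f i * coeff (N i) m = f i * (x i - sum x {..<r})" by simp
    qed
    have E: "e2 {..<r} (\<lambda>j. x j + 1) = e2 {..<r} x - (\<Sum>i<r. f i * (x i - sum x {..<r}))"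
      using c2 unfolding q_def coeff_diff Lp4 Lx4 cs2 .
    define S where "S = sum x {..<r}"
    define Q where "Q = (\<Sum>j<r. (x j)^2)"
    define F where "F = (\<Sum>i<r. x i * f i)"
    have s1: "(\<Sum>j<r. (x j + 1)) = S + r" unfolding S_def by (simp add: sum.distrib)
    have sq: "(x j + 1)^2 = (x j)^2 + 2 * x j + 1" for j by (simp add: power2_eq_square algebra_simps)
    have s2: "(\<Sum>j<r. (x j + 1)^2) = Q + 2 * S + r"
      unfolding sq Q_def S_def by (simp add: sum.distrib sum_distrib_left)
    have s3': "(\<Sum>i<r. f i * (x i - sum x {..<r})) = F - (\<Sum>i<r. f i) * S"
      unfolding F_def S_def by (simp add: algebra_simps sum_subtractf sum_distrib_right)
    have s3: "(\<Sum>i<r. f i * (x i - sum x {..<r})) = F - S * r"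
      unfolding s3' sumf by simp
    have e2a: "e2 {..<r} (\<lambda>j. x j + 1) = ((S + r)^2 - (Q + 2 * S + r)) / 2"
      unfolding e2_def s1 s2 ..
    have e2b: "e2 {..<r} x = (S^2 - Q) / 2"
      unfolding e2_def S_def Q_def ..
    have E': "((S + r)^2 - (Q + 2 * S + r)) / 2 = (S^2 - Q) / 2 - (F - S * r)"
      using E unfolding e2a e2b s3 .
    then have "F = S - real r * (real r - 1) / 2"
      by (simp add: power2_eq_square field_simps)
    then have "(\<Sum>i<r. x i * f i) = sum x {..<r} - real r * (real r - 1) / 2"
      unfolding F_def S_def .
    then show ?thesis unfolding f_def .
  qed
qed


lemma refl_aux: "a < r \<Longrightarrow> r - 1 - (r - 1 - a) = (a::nat)" "a < r \<Longrightarrow> r - 1 - a < (r::nat)"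
  by linarith+

lemma prod_reflect: "(\<Prod>i<(r::nat). g (r - 1 - i)) = (\<Prod>i<r. (g i :: 'a::comm_monoid_mult))"
  by (rule prod.reindex_bij_witness[of _ "\<lambda>i. r - 1 - i" "\<lambda>i. r - 1 - i"]) (simp_all only: lessThan_iff refl_aux)

lemma sum_reflect: "(\<Sum>i<(r::nat). g (r - 1 - i)) = (\<Sum>i<r. (g i :: 'a::comm_monoid_add))"
  by (rule sum.reindex_bij_witness[of _ "\<lambda>i. r - 1 - i" "\<lambda>i. r - 1 - i"]) (simp_all only: lessThan_iff refl_aux)

lemma vandermonde_VV: "vandermonde r x = VV r (\<lambda>k. real (x k))"
  unfolding vandermonde_def VV_def by simp

lemma VV_shift0: "VV (Suc r) x = (\<Prod>k<r. (x (Suc k) - x 0)) * VV r (\<lambda>k. x (Suc k))"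
proof (induction r)
  case 0 then show ?case by (simp add: VV_def)
next
  case (Suc r)
  have "VV (Suc (Suc r)) x = VV (Suc r) x * (\<Prod>i<Suc r. (x (Suc r) - x i))"
    by (rule VV_Suc)
  also have "(\<Prod>i<Suc r. (x (Suc r) - x i)) = (x (Suc r) - x 0) * (\<Prod>i<r. (x (Suc r) - x (Suc i)))"
    by (rule prod.lessThan_Suc_shift)
  finally show ?case unfolding Suc VV_Suc[of r "\<lambda>k. x (Suc k)"] by (simp add: ac_simps)
qed

lemma VV_translate: "VV r (\<lambda>k. x k + c) = VV r x"
  unfolding VV_def by simp

lemma VV_translate': "VV r (\<lambda>k. x k - c) = VV r x"
  unfolding VV_def by simp

lemma cells_append0: "cells (lam @ [0]) = cells lam"
  unfolding cells_def by (auto simp: nth_append less_Suc_eq split: if_splits)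

lemma conj_part_append0: "conj_part (lam @ [0]) j = conj_part lam j"
proof -
  have "{k. k < length (lam @ [0]) \<and> j < (lam @ [0]) ! k} = {k. k < length lam \<and> j < lam ! k}"
    by (auto simp: nth_append less_Suc_eq)
  then show ?thesis unfolding conj_part_def by simp
qed

lemma hook_product_append0: "hook_product (lam @ [0]) = hook_product lam"
  unfolding hook_product_def cells_append0
  by (intro prod.cong refl) (auto simp: hook_length_def conj_part_append0 cells_def nth_append)

lemma shifted_parts_append0:
  "shifted_parts (lam @ [0]) 0 = 0"
  "k < length lam \<Longrightarrow> shifted_parts (lam @ [0]) (Suc k) = Suc (shifted_parts lam k)"
  unfolding shifted_parts_def by (auto simp: nth_append)

lemma sorted_ge_nth: fixes lam :: "nat list" assumes "sorted_wrt (\<ge>) lam" "i \<le> j" "j < length lam" shows "lam ! j \<le> lam ! i"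
proof (cases "i = j")
  case False
  then have "i < j" using assms(2) by simp
  from sorted_wrt_nth_less[OF assms(1) this assms(3)] show ?thesis by simp
qed simp

definition dec1 :: "nat list \<Rightarrow> nat list" where "dec1 lam = map (\<lambda>a. a - 1) lam"

lemma cells_dec1:
  assumes "\<forall>a\<in>set lam. 0 < a"
  shows "cells lam = (\<lambda>i. (i, 0)) ` {..<length lam} \<union> (\<lambda>(i, j). (i, Suc j)) ` cells (dec1 lam)"
proof -
  have "c \<in> (\<lambda>i. (i, 0)) ` {..<length lam} \<union> (\<lambda>(i, j). (i, Suc j)) ` cells (dec1 lam)" if "c \<in> cells lam" for c
  proof -
    obtain i j where c0: "c = (i, j)" by (cases c)
    then have c: "c = (i, j)" "i < length lam" "j < lam ! i" using that by (auto simp: cells_def)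
    show ?thesis
    proof (cases j)
      case 0 then show ?thesis using c by auto
    next
      case (Suc j')
      then have "(i, j') \<in> cells (dec1 lam)" using c unfolding cells_def dec1_def by auto
      then show ?thesis using c Suc by force
    qed
  qed
  moreover have "(i, 0) \<in> cells lam" if "i < length lam" for i
    using assms that unfolding cells_def by auto
  moreover have "(i, Suc j) \<in> cells lam" if "(i, j) \<in> cells (dec1 lam)" for i j
    using that unfolding cells_def dec1_def by auto
  ultimately show ?thesis
  proof (intro equalityI subsetI)
    fix c assume "c \<in> cells lam"
    then show "c \<in> (\<lambda>i. (i, 0)) ` {..<length lam} \<union> (\<lambda>(i, j). (i, Suc j)) ` cells (dec1 lam)"
      using \<open>\<And>c. c \<in> cells lam \<Longrightarrow> _\<close> by simp
  next
    fix c assume c: "c \<in> (\<lambda>i. (i, 0)) ` {..<length lam} \<union> (\<lambda>(i, j). (i, Suc j)) ` cells (dec1 lam)"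
    show "c \<in> cells lam"
    proof (cases "c \<in> (\<lambda>i. (i, 0)) ` {..<length lam}")
      case True
      then obtain i where "i < length lam" "c = (i, 0)" by auto
      then show ?thesis using \<open>\<And>i. i < length lam \<Longrightarrow> (i, 0) \<in> cells lam\<close> by simp
    next
      case False
      then have "c \<in> (\<lambda>(i, j). (i, Suc j)) ` cells (dec1 lam)" using c by simp
      then obtain d where d: "d \<in> cells (dec1 lam)" "c = (\<lambda>(i, j). (i, Suc j)) d" by blast
      obtain i j where "d = (i, j)" by (cases d)
      then show ?thesis using d \<open>\<And>i j. (i, j) \<in> cells (dec1 lam) \<Longrightarrow> (i, Suc j) \<in> cells lam\<close> by simp
    qed
  qed
qed

lemma conj_part_0:
  assumes "\<forall>a\<in>set lam. 0 < a"
  shows "conj_part lam 0 = length lam"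
proof -
  have "{k. k < length lam \<and> 0 < lam ! k} = {..<length lam}" using assms by auto
  then show ?thesis unfolding conj_part_def by simp
qed

lemma conj_part_dec1: "conj_part lam (Suc j) = conj_part (dec1 lam) j"
proof -
  have "{k. k < length lam \<and> Suc j < lam ! k} = {k. k < length (dec1 lam) \<and> j < dec1 lam ! k}"
    unfolding dec1_def by auto
  then show ?thesis unfolding conj_part_def by simp
qed

lemma finite_cells: "finite (cells l)"
proof -
  have "j < sum_list l" if "i < length l" "j < l ! i" for i j
    using elem_le_sum_list[of i l] that by linarith
  then have "cells l \<subseteq> {..<length l} \<times> {..<sum_list l}"
    unfolding cells_def by auto
  then show ?thesis by (rule finite_subset) auto
qed

lemma hook_product_dec1:
  assumes pos: "\<forall>a\<in>set lam. 0 < a"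
  shows "hook_product lam = (\<Prod>i<length lam. (lam ! i + length lam - 1 - i)) * hook_product (dec1 lam)"
proof -
  let ?r = "length lam"
  have disj: "(\<lambda>i. (i, 0)) ` {..<?r} \<inter> (\<lambda>(i, j). (i, Suc j)) ` cells (dec1 lam) = {}" by auto
  have fin: "finite (cells l)" for l by (rule finite_cells)
  have inj1: "inj_on (\<lambda>i. (i, 0::nat)) {..<?r}" by (auto simp: inj_on_def)
  have inj2: "inj_on (\<lambda>(i, j). (i, Suc j)) (cells (dec1 lam))" by (auto simp: inj_on_def)
  have "hook_product lam = (\<Prod>c\<in>(\<lambda>i. (i, 0)) ` {..<?r}. hook_length lam (fst c) (snd c))
      * (\<Prod>c\<in>(\<lambda>(i, j). (i, Suc j)) ` cells (dec1 lam). hook_length lam (fst c) (snd c))"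
    unfolding hook_product_def cells_dec1[OF pos]
    by (rule prod.union_disjoint) (use disj fin in auto)
  also have "(\<Prod>c\<in>(\<lambda>i. (i, 0)) ` {..<?r}. hook_length lam (fst c) (snd c)) = (\<Prod>i<?r. (lam ! i + ?r - 1 - i))"
    unfolding prod.reindex[OF inj1]
    by (intro prod.cong refl) (auto simp: hook_length_def conj_part_0[OF pos])
  also have "(\<Prod>c\<in>(\<lambda>(i, j). (i, Suc j)) ` cells (dec1 lam). hook_length lam (fst c) (snd c)) = hook_product (dec1 lam)"
    unfolding prod.reindex[OF inj2] hook_product_def
  proof (intro prod.cong refl)
    fix c assume "c \<in> cells (dec1 lam)"
    then obtain i j where c: "c = (i, j)" "i < ?r" by (auto simp: cells_def dec1_def)
    show "((\<lambda>c. hook_length lam (fst c) (snd c)) \<circ> (\<lambda>(i, j). (i, Suc j))) c = hook_length (dec1 lam) (fst c) (snd c)"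
      using c by (simp add: hook_length_def conj_part_dec1[symmetric]) (simp add: dec1_def)
  qed
  finally show ?thesis .
qed


lemma sum_list_dec1: "\<forall>a\<in>set lam. 0 < a \<Longrightarrow> sum_list (dec1 lam) + length lam = sum_list lam"
  by (induction lam) (auto simp: dec1_def)

lemma length_dec1[simp]: "length (dec1 lam) = length lam"
  by (simp add: dec1_def)

lemma sorted_dec1: "sorted_wrt (\<ge>) (lam::nat list) \<Longrightarrow> sorted_wrt (\<ge>) (dec1 lam)"
  unfolding dec1_def sorted_wrt_map by (rule sorted_wrt_mono_rel) auto

lemma shifted_parts_dec1:
  assumes "\<forall>a\<in>set lam. 0 < a" "k < length lam"
  shows "shifted_parts (dec1 lam) k = shifted_parts lam k - 1" "shifted_parts lam k \<ge> 1"
proof -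
  have "lam ! (length lam - 1 - k) \<in> set lam" using assms(2) by simp
  then have "lam ! (length lam - 1 - k) > 0" using assms(1) by blast
  then show "shifted_parts (dec1 lam) k = shifted_parts lam k - 1" "shifted_parts lam k \<ge> 1"
    unfolding shifted_parts_def dec1_def using assms(2) by auto
qed

lemma hook_vdm:
  fixes lam :: "nat list"
  assumes "sorted_wrt (\<ge>) lam"
  shows "real (hook_product lam) * VV (length lam) (\<lambda>k. real (shifted_parts lam k))
         = (\<Prod>j<length lam. fact (shifted_parts lam j))"
  using assms
proof (induction "sum_list lam + length lam" arbitrary: lam rule: less_induct)
  case less
  show ?case
  proof (cases "lam = []")
    case True
    then show ?thesis by (simp add: hook_product_def cells_def VV_def)
  next
    case nonempty: False
    show ?thesis
    proof (cases "last lam = 0")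
      case True
      define l0 where "l0 = butlast lam"
      have lam: "lam = l0 @ [0]" using nonempty True unfolding l0_def by (metis append_butlast_last_id)
      have s0: "sorted_wrt (\<ge>) l0" using less.prems unfolding lam by (simp add: sorted_wrt_append)
      have IH: "real (hook_product l0) * VV (length l0) (\<lambda>k. real (shifted_parts l0 k))
         = (\<Prod>j<length l0. fact (shifted_parts l0 j))"
        by (rule less.hyps[OF _ s0]) (simp add: lam)
      let ?r = "length l0"
      let ?y = "\<lambda>k. real (shifted_parts l0 k)"
      have V: "VV (length lam) (\<lambda>k. real (shifted_parts lam k)) = (\<Prod>k<?r. (?y k + 1)) * VV ?r ?y"
      proof -
        have "VV (length lam) (\<lambda>k. real (shifted_parts lam k))
            = (\<Prod>k<?r. (real (shifted_parts lam (Suc k)) - real (shifted_parts lam 0)))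
              * VV ?r (\<lambda>k. real (shifted_parts lam (Suc k)))"
          unfolding lam by (simp add: VV_shift0)
        also have "(\<Prod>k<?r. (real (shifted_parts lam (Suc k)) - real (shifted_parts lam 0))) = (\<Prod>k<?r. (?y k + 1))"
          unfolding lam by (intro prod.cong refl) (simp add: shifted_parts_append0)
        also have "VV ?r (\<lambda>k. real (shifted_parts lam (Suc k))) = VV ?r (\<lambda>k. ?y k + 1)"
          unfolding lam by (intro VV_cong) (simp add: shifted_parts_append0)
        also have "\<dots> = VV ?r ?y" by (rule VV_translate)
        finally show ?thesis .
      qed
      have F: "(\<Prod>j<length lam. (fact (shifted_parts lam j) :: real)) = (\<Prod>k<?r. (?y k + 1)) * (\<Prod>j<?r. fact (shifted_parts l0 j))"
      proof -
        have "(\<Prod>j<length lam. (fact (shifted_parts lam j) :: real))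
            = fact (shifted_parts lam 0) * (\<Prod>k<?r. fact (shifted_parts lam (Suc k)))"
          unfolding lam by (simp add: prod.lessThan_Suc_shift del: prod.lessThan_Suc)
        also have "\<dots> = (\<Prod>k<?r. (?y k + 1) * fact (shifted_parts l0 k))"
          unfolding lam by (simp add: shifted_parts_append0) (intro prod.cong refl, simp add: shifted_parts_append0 algebra_simps)
        also have "\<dots> = (\<Prod>k<?r. (?y k + 1)) * (\<Prod>j<?r. fact (shifted_parts l0 j))"
          by (rule prod.distrib)
        finally show ?thesis .
      qed
      have Hp: "hook_product lam = hook_product l0" unfolding lam by (rule hook_product_append0)
      show ?thesis unfolding V F Hp using IH by (simp add: ac_simps)
    next
      case False
      let ?r = "length lam"
      have pos: "\<forall>a\<in>set lam. 0 < a"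
      proof
        fix a assume "a \<in> set lam"
        then obtain i where i: "i < ?r" "a = lam ! i" by (auto simp: in_set_conv_nth)
        have "lam ! (?r - 1) \<le> lam ! i" using sorted_ge_nth[OF less.prems, of i "?r - 1"] i nonempty by simp
        moreover have "last lam = lam ! (?r - 1)" using nonempty by (simp add: last_conv_nth)
        ultimately show "0 < a" using False i by simp
      qed
      have sd: "sorted_wrt (\<ge>) (dec1 lam)" by (rule sorted_dec1[OF less.prems])
      have IH: "real (hook_product (dec1 lam)) * VV ?r (\<lambda>k. real (shifted_parts (dec1 lam) k))
         = (\<Prod>j<?r. fact (shifted_parts (dec1 lam) j))"
        using less.hyps[OF _ sd] sum_list_dec1[OF pos] nonempty by simp
      have V: "VV ?r (\<lambda>k. real (shifted_parts (dec1 lam) k)) = VV ?r (\<lambda>k. real (shifted_parts lam k))"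
      proof -
        have "VV ?r (\<lambda>k. real (shifted_parts (dec1 lam) k)) = VV ?r (\<lambda>k. real (shifted_parts lam k) - 1)"
          by (intro VV_cong) (use shifted_parts_dec1[OF pos] in \<open>simp add: of_nat_diff\<close>)
        also have "\<dots> = VV ?r (\<lambda>k. real (shifted_parts lam k))" by (rule VV_translate')
        finally show ?thesis .
      qed
      have F: "(\<Prod>j<?r. (fact (shifted_parts lam j) :: real))
          = (\<Prod>j<?r. real (shifted_parts lam j)) * (\<Prod>j<?r. fact (shifted_parts (dec1 lam) j))"
      proof -
        have "(\<Prod>j<?r. (fact (shifted_parts lam j) :: real)) = (\<Prod>j<?r. real (shifted_parts lam j) * fact (shifted_parts (dec1 lam) j))"
        proof (intro prod.cong refl)
          fix j assume "j \<in> {..<?r}"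
          then have j: "shifted_parts (dec1 lam) j = shifted_parts lam j - 1" "shifted_parts lam j \<ge> 1"
            using shifted_parts_dec1[OF pos] by auto
          show "(fact (shifted_parts lam j) :: real) = real (shifted_parts lam j) * fact (shifted_parts (dec1 lam) j)"
            unfolding j(1) using j(2) by (simp add: fact_reduce)
        qed
        then show ?thesis by (simp add: prod.distrib)
      qed
      have P: "(\<Prod>i<?r. (lam ! i + ?r - 1 - i)) = (\<Prod>j<?r. shifted_parts lam j)"
      proof -
        have "(\<Prod>j<?r. shifted_parts lam j) = (\<Prod>j<?r. (\<lambda>i. lam ! i + ?r - 1 - i) (?r - 1 - j))"
          by (intro prod.cong refl) (auto simp: shifted_parts_def)
        also have "\<dots> = (\<Prod>i<?r. (lam ! i + ?r - 1 - i))" by (rule prod_reflect)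
        finally show ?thesis by simp
      qed
      have Hp: "real (hook_product lam) = (\<Prod>j<?r. real (shifted_parts lam j)) * real (hook_product (dec1 lam))"
        unfolding hook_product_dec1[OF pos] P by simp
      show ?thesis unfolding F Hp using IH V by (simp add: ac_simps)
    qed
  qed
qed


definition corners :: "nat list \<Rightarrow> nat set" where
  "corners lam = {i. i < length lam \<and> 0 < lam ! i \<and> (Suc i < length lam \<longrightarrow> lam ! Suc i < lam ! i)}"

definition decr :: "nat list \<Rightarrow> nat \<Rightarrow> nat list" where
  "decr lam i = lam[i := lam ! i - 1]"

lemma cells_decr:
  assumes "i \<in> corners lam"
  shows "cells (decr lam i) = cells lam - {(i, lam ! i - 1)}"
proof -
  have i: "i < length lam" "0 < lam ! i" using assms by (auto simp: corners_def)
  show ?thesis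
  proof (intro equalityI subsetI)
    fix c assume "c \<in> cells (decr lam i)"
    then obtain a b where c: "c = (a, b)" "a < length lam" "b < (decr lam i) ! a"
      by (cases c) (auto simp: cells_def decr_def)
    show "c \<in> cells lam - {(i, lam ! i - 1)}"
    proof (cases "a = i")
      case True
      then show ?thesis using c i by (auto simp: cells_def decr_def)
    next
      case False
      then show ?thesis using c i by (auto simp: cells_def decr_def)
    qed
  next
    fix c assume c0: "c \<in> cells lam - {(i, lam ! i - 1)}"
    then obtain a b where c: "c = (a, b)" "a < length lam" "b < lam ! a" "(a, b) \<noteq> (i, lam ! i - 1)"
      by (cases c) (auto simp: cells_def)
    show "c \<in> cells (decr lam i)"
    proof (cases "a = i")
      case True
      then have "b < lam ! i - 1" using c by auto
      then show ?thesis using c True by (auto simp: cells_def decr_def)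
    next
      case False
      then show ?thesis using c by (auto simp: cells_def decr_def)
    qed
  qed
qed

lemma corner_in_cells: "i \<in> corners lam \<Longrightarrow> (i, lam ! i - 1) \<in> cells lam"
  by (auto simp: corners_def cells_def)

lemma psize_decr: "i \<in> corners lam \<Longrightarrow> psize (decr lam i) = psize lam - 1"
  unfolding psize_def decr_def corners_def by (auto simp: sum_list_update)

lemma psize_pos_corner: "i \<in> corners lam \<Longrightarrow> psize lam \<ge> 1"
  unfolding psize_def corners_def using elem_le_sum_list[of i lam] by auto

lemma sorted_decr:
  fixes lam :: "nat list"
  assumes s: "sorted_wrt (\<ge>) lam" and i: "i \<in> corners lam"
  shows "sorted_wrt (\<ge>) (decr lam i)"
proof -
  have ir: "i < length lam" "0 < lam ! i" "Suc i < length lam \<Longrightarrow> lam ! Suc i < lam ! i"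
    using i by (auto simp: corners_def)
  show ?thesis unfolding sorted_wrt_iff_nth_less
  proof (intro allI impI)
    fix a b assume ab: "a < b" "b < length (decr lam i)"
    then have b: "b < length lam" by (simp add: decr_def)
    have sab: "lam ! b \<le> lam ! a" using sorted_ge_nth[OF s, of a b] ab b by simp
    show "decr lam i ! b \<le> decr lam i ! a"
    proof (cases "a = i")
      case True
      then have "Suc i \<le> b" using ab by simp
      then have "lam ! b \<le> lam ! Suc i" using sorted_ge_nth[OF s, of "Suc i" b] b by simp
      then have "lam ! b < lam ! i" using ir(3) \<open>Suc i \<le> b\<close> b by simp
      then show ?thesis using True ab b ir by (simp add: decr_def)
    next
      case False
      then show ?thesis using sab ab b ir by (cases "b = i") (auto simp: decr_def)
    qed
  qed
qed

lemma cell_left: "(a, Suc b) \<in> cells lam \<Longrightarrow> (a, b) \<in> cells lam"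
  by (auto simp: cells_def)

lemma cell_up:
  fixes lam :: "nat list"
  assumes "sorted_wrt (\<ge>) lam" "(Suc a, b) \<in> cells lam" shows "(a, b) \<in> cells lam"
proof -
  have "Suc a < length lam" "b < lam ! Suc a" using assms(2) by (auto simp: cells_def)
  moreover have "lam ! Suc a \<le> lam ! a" using sorted_ge_nth[OF assms(1), of a "Suc a"] calculation by simp
  ultimately show ?thesis by (auto simp: cells_def)
qed

lemma finite_SYT: "finite (SYT lam)"
proof -
  have "SYT lam \<subseteq> PiE (cells lam) (\<lambda>_. {1..psize lam})"
  proof
    fix T assume T: "T \<in> SYT lam"
    then have "T \<in> extensional (cells lam)" "bij_betw T (cells lam) {1..psize lam}" by (auto simp: SYT_def)
    then show "T \<in> PiE (cells lam) (\<lambda>_. {1..psize lam})"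
      by (auto simp: PiE_iff bij_betw_def)
  qed
  moreover have "finite (PiE (cells lam) (\<lambda>_. {1..psize lam}))"
    by (intro finite_PiE finite_cells) auto
  ultimately show ?thesis by (rule finite_subset)
qed

lemma SYT_max_corner:
  fixes lam :: "nat list"
  assumes s: "sorted_wrt (\<ge>) lam" and n: "psize lam > 0" and T: "T \<in> SYT lam"
  shows "\<exists>i\<in>corners lam. T (i, lam ! i - 1) = psize lam"
proof -
  let ?n = "psize lam"
  have bij: "bij_betw T (cells lam) {1..?n}" using T by (simp add: SYT_def)
  have row: "\<And>i j. (i, Suc j) \<in> cells lam \<Longrightarrow> T (i, j) < T (i, Suc j)"
   and col: "\<And>i j. (Suc i, j) \<in> cells lam \<Longrightarrow> T (i, j) < T (Suc i, j)" using T by (auto simp: SYT_def)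
  have rng: "\<And>c. c \<in> cells lam \<Longrightarrow> T c \<le> ?n" using bij by (auto simp: bij_betw_def)
  have "?n \<in> T ` cells lam" using bij n by (auto simp: bij_betw_def)
  then obtain c where c: "c \<in> cells lam" "T c = ?n" by auto
  obtain i j where ij: "c = (i, j)" by (cases c)
  have ci: "i < length lam" "j < lam ! i" using c ij by (auto simp: cells_def)
  have j: "j = lam ! i - 1"
  proof (rule ccontr)
    assume "j \<noteq> lam ! i - 1"
    then have "(i, Suc j) \<in> cells lam" using ci by (auto simp: cells_def)
    then have "T (i, j) < T (i, Suc j)" "T (i, Suc j) \<le> ?n" using row rng by auto
    then show False using c ij by simp
  qed
  have "i \<in> corners lam"
    unfolding corners_def
  proof (intro CollectI conjI impI)
    show "i < length lam" "0 < lam ! i" using ci by auto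
    assume si: "Suc i < length lam"
    show "lam ! Suc i < lam ! i"
    proof (rule ccontr)
      assume "\<not> lam ! Suc i < lam ! i"
      then have "(Suc i, j) \<in> cells lam" using si ci by (auto simp: cells_def)
      then have "T (i, j) < T (Suc i, j)" "T (Suc i, j) \<le> ?n" using col rng by auto
      then show False using c ij by simp
    qed
  qed
  then show ?thesis using c ij j by auto
qed

lemma SYT_part_bij:
  fixes lam :: "nat list"
  assumes s: "sorted_wrt (\<ge>) lam" and i: "i \<in> corners lam"
  shows "bij_betw (\<lambda>T. restrict T (cells (decr lam i)))
           {T \<in> SYT lam. T (i, lam ! i - 1) = psize lam} (SYT (decr lam i))"
proof -
  let ?c = "(i, lam ! i - 1)"
  let ?n = "psize lam"
  let ?l = "decr lam i"
  have cc: "?c \<in> cells lam" by (rule corner_in_cells[OF i])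
  have cl: "cells ?l = cells lam - {?c}" by (rule cells_decr[OF i])
  have cnot: "?c \<notin> cells ?l" using cl by simp
  have pn: "psize ?l = ?n - 1" by (rule psize_decr[OF i])
  have n1: "?n \<ge> 1" by (rule psize_pos_corner[OF i])
  have sl: "sorted_wrt (\<ge>) ?l" by (rule sorted_decr[OF s i])
  have ir: "i < length lam" "Suc i < length lam \<Longrightarrow> lam ! Suc i < lam ! i" using i by (auto simp: corners_def)
  have rng_eq: "{1..?n} - {?n} = {1..?n - 1}" using n1 by auto
  show ?thesis
  proof (rule bij_betw_byWitness[where f' = "\<lambda>T'. T'(?c := ?n)"])
    show "\<forall>T\<in>{T \<in> SYT lam. T ?c = ?n}. (restrict T (cells ?l))(?c := ?n) = T"
    proof
      fix T assume T: "T \<in> {T \<in> SYT lam. T ?c = ?n}"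
      then have ext: "T \<in> extensional (cells lam)" by (simp add: SYT_def)
      show "(restrict T (cells ?l))(?c := ?n) = T"
      proof
        fix x show "((restrict T (cells ?l))(?c := ?n)) x = T x"
          using T extensional_arb[OF ext, of x] cl by (cases "x = ?c") auto
      qed
    qed
    show "\<forall>T'\<in>SYT ?l. restrict (T'(?c := ?n)) (cells ?l) = T'"
    proof
      fix T' assume T': "T' \<in> SYT ?l"
      then have ext: "T' \<in> extensional (cells ?l)" by (simp add: SYT_def)
      show "restrict (T'(?c := ?n)) (cells ?l) = T'"
      proof
        fix x show "restrict (T'(?c := ?n)) (cells ?l) x = T' x"
          using extensional_arb[OF ext, of x] cnot by (cases "x \<in> cells ?l") auto
      qed
    qed
    show "(\<lambda>T. restrict T (cells ?l)) ` {T \<in> SYT lam. T ?c = ?n} \<subseteq> SYT ?l"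
    proof
      fix T' assume "T' \<in> (\<lambda>T. restrict T (cells ?l)) ` {T \<in> SYT lam. T ?c = ?n}"
      then obtain T where T: "T \<in> SYT lam" "T ?c = ?n" and T'def: "T' = restrict T (cells ?l)" by auto
      have bij: "bij_betw T (cells lam) {1..?n}" using T by (simp add: SYT_def)
      have row: "\<And>a b. (a, Suc b) \<in> cells lam \<Longrightarrow> T (a, b) < T (a, Suc b)"
       and col: "\<And>a b. (Suc a, b) \<in> cells lam \<Longrightarrow> T (a, b) < T (Suc a, b)" using T by (auto simp: SYT_def)
      have "bij_betw T (cells lam - {?c}) ({1..?n} - {?n})"
        by (rule bij_betw_DiffI[OF bij]) (use cc T n1 in auto)
      then have "bij_betw T (cells ?l) {1..psize ?l}" unfolding cl pn rng_eq .
      then have b': "bij_betw T' (cells ?l) {1..psize ?l}"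
        unfolding T'def by (rule iffD1[OF bij_betw_cong, rotated]) simp
      have row': "T' (a, b) < T' (a, Suc b)" if "(a, Suc b) \<in> cells ?l" for a b
      proof -
        have "(a, b) \<in> cells ?l" using cell_left[OF that] .
        moreover have "(a, Suc b) \<in> cells lam" using that cl by simp
        ultimately show ?thesis using row that unfolding T'def by simp
      qed
      have col': "T' (a, b) < T' (Suc a, b)" if "(Suc a, b) \<in> cells ?l" for a b
      proof -
        have "(a, b) \<in> cells ?l" using cell_up[OF sl that] .
        moreover have "(Suc a, b) \<in> cells lam" using that cl by simp
        ultimately show ?thesis using col that unfolding T'def by simp
      qed
      show "T' \<in> SYT ?l" unfolding SYT_def using b' row' col' T'def by simp
    qed
    show "(\<lambda>T'. T'(?c := ?n)) ` SYT ?l \<subseteq> {T \<in> SYT lam. T ?c = ?n}"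
    proof
      fix T assume "T \<in> (\<lambda>T'. T'(?c := ?n)) ` SYT ?l"
      then obtain T' where T': "T' \<in> SYT ?l" and Tdef: "T = T'(?c := ?n)" by auto
      have ext': "T' \<in> extensional (cells ?l)" using T' by (simp add: SYT_def)
      have bij': "bij_betw T' (cells ?l) {1..?n - 1}" using T' pn by (simp add: SYT_def)
      have row': "\<And>a b. (a, Suc b) \<in> cells ?l \<Longrightarrow> T' (a, b) < T' (a, Suc b)"
       and col': "\<And>a b. (Suc a, b) \<in> cells ?l \<Longrightarrow> T' (a, b) < T' (Suc a, b)" using T' by (auto simp: SYT_def)
      have rng': "\<And>x. x \<in> cells ?l \<Longrightarrow> T' x \<le> ?n - 1" using bij' by (auto simp: bij_betw_def)
      have ext: "T \<in> extensional (cells lam)"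
        using ext' cl cc unfolding Tdef extensional_def by auto
      have TT': "T x = T' x" if "x \<in> cells ?l" for x using that cnot unfolding Tdef by auto
      have "bij_betw T (cells ?l) {1..?n - 1}"
        using bij' by (rule iffD2[OF bij_betw_cong, rotated]) (rule TT')
      then have "bij_betw T (cells ?l \<union> {?c}) ({1..?n - 1} \<union> {T ?c})"
        by (rule notIn_Un_bij_betw[OF cnot, rotated]) (use n1 Tdef in simp)
      moreover have "cells ?l \<union> {?c} = cells lam" using cl cc by auto
      moreover have "{1..?n - 1} \<union> {T ?c} = {1..?n}" using n1 Tdef by auto
      ultimately have bT: "bij_betw T (cells lam) {1..?n}" by simp
      have Tc: "T ?c = ?n" unfolding Tdef by simp
      have rowT: "T (a, b) < T (a, Suc b)" if ab: "(a, Suc b) \<in> cells lam" for a b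
      proof -
        have ab0: "(a, b) \<in> cells lam" by (rule cell_left[OF ab])
        have ne: "(a, b) \<noteq> ?c"
        proof
          assume "(a, b) = ?c"
          then have "a = i" "Suc b = lam ! i" using i by (auto simp: corners_def)
          then show False using ab by (auto simp: cells_def)
        qed
        then have l0: "(a, b) \<in> cells ?l" using ab0 cl by simp
        show ?thesis
        proof (cases "(a, Suc b) = ?c")
          case True
          then show ?thesis using rng'[OF l0] TT'[OF l0] Tc n1 by simp
        next
          case False
          then have "(a, Suc b) \<in> cells ?l" using ab cl by simp
          then show ?thesis using row' TT' l0 by auto
        qed
      qed
      have colT: "T (a, b) < T (Suc a, b)" if ab: "(Suc a, b) \<in> cells lam" for a b
      proof -
        have ab0: "(a, b) \<in> cells lam" by (rule cell_up[OF s ab])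
        have ne: "(a, b) \<noteq> ?c"
        proof
          assume "(a, b) = ?c"
          then have "a = i" "b = lam ! i - 1" by auto
          then have "Suc i < length lam" "lam ! i - 1 < lam ! Suc i" using ab by (auto simp: cells_def)
          then show False using ir(2) by simp
        qed
        then have l0: "(a, b) \<in> cells ?l" using ab0 cl by simp
        show ?thesis
        proof (cases "(Suc a, b) = ?c")
          case True
          then show ?thesis using rng'[OF l0] TT'[OF l0] Tc n1 by simp
        next
          case False
          then have "(Suc a, b) \<in> cells ?l" using ab cl by simp
          then show ?thesis using col' TT' l0 by auto
        qed
      qed
      show "T \<in> {T \<in> SYT lam. T ?c = ?n}" unfolding SYT_def using ext bT rowT colT Tdef by simp
    qed
  qed
qed


lemma VV_key:
  fixes x :: "nat \<Rightarrow> real"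
  assumes inj: "inj_on x {..<r}"
  shows "(\<Sum>i<r. x i * VV r (x(i := x i - 1))) = (sum x {..<r} - real r * (real r - 1) / 2) * VV r x"
proof -
  have "x i * VV r (x(i := x i - 1)) = VV r x * (x i * ((\<Prod>j\<in>{..<r}-{i}. (x i - 1 - x j)) / (\<Prod>j\<in>{..<r}-{i}. (x i - x j))))"
    if i: "i < r" for i
  proof -
    have den: "(\<Prod>j\<in>{..<r}-{i}. (x i - x j)) \<noteq> 0" using inj i by (auto simp: inj_on_def)
    have "VV r (x(i := x i - 1)) * (\<Prod>j\<in>{..<r}-{i}. (x i - x j)) = VV r x * (\<Prod>j\<in>{..<r}-{i}. (x i - 1 - x j))"
      by (rule VV_upd[OF i])
    then have "VV r (x(i := x i - 1)) = VV r x * (\<Prod>j\<in>{..<r}-{i}. (x i - 1 - x j)) / (\<Prod>j\<in>{..<r}-{i}. (x i - x j))"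
      using den by (simp add: field_simps)
    then show ?thesis by simp
  qed
  then have "(\<Sum>i<r. x i * VV r (x(i := x i - 1))) = (\<Sum>i<r. VV r x * (x i * ((\<Prod>j\<in>{..<r}-{i}. (x i - 1 - x j)) / (\<Prod>j\<in>{..<r}-{i}. (x i - x j)))))"
    by (intro sum.cong refl) simp
  also have "\<dots> = VV r x * (\<Sum>i<r. x i * ((\<Prod>j\<in>{..<r}-{i}. (x i - 1 - x j)) / (\<Prod>j\<in>{..<r}-{i}. (x i - x j))))"
    by (simp add: sum_distrib_left)
  also have "\<dots> = VV r x * (sum x {..<r} - real r * (real r - 1) / 2)"
    unfolding lagrange_key[OF inj] ..
  finally show ?thesis by simp
qed

lemma card_SYT_rec:
  fixes lam :: "nat list"
  assumes s: "sorted_wrt (\<ge>) lam" and n: "psize lam > 0"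
  shows "card (SYT lam) = (\<Sum>i\<in>corners lam. card (SYT (decr lam i)))"
proof -
  define A where "A = (\<lambda>i. {T \<in> SYT lam. T (i, lam ! i - 1) = psize lam})"
  have U: "SYT lam = (\<Union>i\<in>corners lam. A i)"
  proof (intro equalityI subsetI)
    fix T assume T: "T \<in> SYT lam"
    obtain i where i: "i \<in> corners lam" "T (i, lam ! i - 1) = psize lam"
      using SYT_max_corner[OF s n T] by blast
    then have "T \<in> A i" unfolding A_def using T by simp
    then show "T \<in> (\<Union>i\<in>corners lam. A i)" using i(1) by (rule UN_I[rotated])
  next
    fix T assume "T \<in> (\<Union>i\<in>corners lam. A i)"
    then obtain i where "T \<in> A i" by (rule UN_E)
    then show "T \<in> SYT lam" unfolding A_def by simp
  qed
  have fc: "finite (corners lam)"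
    by (rule finite_subset[of _ "{..<length lam}"]) (auto simp: corners_def)
  have "card (\<Union>i\<in>corners lam. A i) = (\<Sum>i\<in>corners lam. card (A i))"
  proof (rule card_UN_disjoint[OF fc])
    show "\<forall>i\<in>corners lam. finite (A i)" unfolding A_def using finite_SYT by auto
    show "\<forall>i\<in>corners lam. \<forall>j\<in>corners lam. i \<noteq> j \<longrightarrow> A i \<inter> A j = {}"
    proof (intro ballI impI)
      fix i j assume ij: "i \<in> corners lam" "j \<in> corners lam" "i \<noteq> j"
      show "A i \<inter> A j = {}"
      proof (rule ccontr)
        assume "A i \<inter> A j \<noteq> {}"
        then obtain T where "T \<in> A i \<inter> A j" by blast
        then have T: "T \<in> SYT lam" "T (i, lam ! i - 1) = psize lam" "T (j, lam ! j - 1) = psize lam"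
          unfolding A_def by auto
        then have inj: "inj_on T (cells lam)" by (simp add: SYT_def bij_betw_def)
        have "T (i, lam ! i - 1) = T (j, lam ! j - 1)" using T by simp
        from inj_onD[OF inj this corner_in_cells[OF ij(1)] corner_in_cells[OF ij(2)]]
        have "(i, lam ! i - 1) = (j, lam ! j - 1)" .
        then show False using ij by simp
      qed
    qed
  qed
  also have "\<dots> = (\<Sum>i\<in>corners lam. card (SYT (decr lam i)))"
  proof (intro sum.cong refl)
    fix i assume "i \<in> corners lam"
    then show "card (A i) = card (SYT (decr lam i))"
      unfolding A_def by (rule bij_betw_same_card[OF SYT_part_bij[OF s]])
  qed
  finally show ?thesis using U by simp
qed

lemma sum_real_lessThan: "(\<Sum>k<r. real k) = real r * (real r - 1) / 2"
  by (induction r) (auto simp: field_simps)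

lemma SYT_empty:
  assumes "psize lam = 0"
  shows "card (SYT lam) = 1"
proof -
  have c: "cells lam = {}"
  proof -
    have "False" if "i < length lam" "j < lam ! i" for i j
      using elem_le_sum_list[of i lam] that assms unfolding psize_def by linarith
    then show ?thesis unfolding cells_def by auto
  qed
  have "SYT lam = {(\<lambda>_. undefined) :: nat \<times> nat \<Rightarrow> nat}"
  proof (intro equalityI subsetI)
    fix T assume "T \<in> SYT lam"
    then have "T \<in> extensional {}" unfolding SYT_def c by simp
    then show "T \<in> {\<lambda>_. undefined}" by simp
  next
    fix T :: "nat \<times> nat \<Rightarrow> nat" assume "T \<in> {\<lambda>_. undefined}"
    then have T: "T = (\<lambda>_. undefined)" by simp
    have "{1..psize lam} = {}" using assms by simp
    then show "T \<in> SYT lam" unfolding SYT_def c T by (simp add: bij_betw_def)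
  qed
  then show ?thesis by simp
qed

lemma hook_empty: "psize lam = 0 \<Longrightarrow> hook_product lam = 1"
proof -
  assume a: "psize lam = 0"
  have "False" if "i < length lam" "j < lam ! i" for i j
    using elem_le_sum_list[of i lam] that a unfolding psize_def by linarith
  then have "cells lam = {}" unfolding cells_def by auto
  then show ?thesis by (simp add: hook_product_def)
qed


lemma shifted_mono:
  fixes lam :: "nat list"
  assumes s: "sorted_wrt (\<ge>) lam" and kk: "k < k'" "k' < length lam"
  shows "shifted_parts lam k < shifted_parts lam k'"
proof -
  let ?r = "length lam"
  have "lam ! (?r - 1 - k) \<le> lam ! (?r - 1 - k')"
    using sorted_ge_nth[OF s, of "?r - 1 - k'" "?r - 1 - k"] kk by simp
  then show ?thesis unfolding shifted_parts_def using kk by simp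
qed

lemma inj_shift:
  fixes lam :: "nat list"
  assumes s: "sorted_wrt (\<ge>) lam"
  shows "inj_on (\<lambda>k. real (shifted_parts lam k)) {..<length lam}"
proof (rule linorder_inj_onI')
  fix i j assume "i \<in> {..<length lam}" "j \<in> {..<length lam}" "i < j"
  then have "shifted_parts lam i < shifted_parts lam j" using shifted_mono[OF s] by simp
  then show "real (shifted_parts lam i) \<noteq> real (shifted_parts lam j)" by simp
qed

lemma sum_shift:
  "(\<Sum>k<length lam. real (shifted_parts lam k)) - real (length lam) * (real (length lam) - 1) / 2
    = real (psize lam)"
proof -
  let ?r = "length lam"
  have "(\<Sum>k<?r. real (shifted_parts lam k)) = (\<Sum>k<?r. real (lam ! (?r - 1 - k))) + (\<Sum>k<?r. real k)"
    unfolding shifted_parts_def by (simp add: sum.distrib)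
  also have "(\<Sum>k<?r. real (lam ! (?r - 1 - k))) = (\<Sum>k<?r. real (lam ! k))"
    by (rule sum_reflect[where g = "\<lambda>k. real (lam ! k)"])
  also have "\<dots> = real (psize lam)"
    unfolding psize_def sum_list_sum_nth atLeast0LessThan by simp
  finally show ?thesis using sum_real_lessThan[of ?r] by simp
qed

lemma shifted_decr:
  assumes i: "i \<in> corners lam" and k: "k < length lam"
  shows "shifted_parts (decr lam i) k
          = (if k = length lam - 1 - i then shifted_parts lam k - 1 else shifted_parts lam k)"
proof -
  have ir: "i < length lam" "0 < lam ! i" using i by (auto simp: corners_def)
  have len: "length (decr lam i) = length lam" by (simp add: decr_def)
  have e: "(length lam - 1 - k = i) = (k = length lam - 1 - i)" using ir k by auto
  show ?thesis
    unfolding shifted_parts_def len decr_def using k ir e by (auto simp: nth_list_update)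
qed

lemma shifted_corner_pos: "i \<in> corners lam \<Longrightarrow> shifted_parts lam (length lam - 1 - i) \<ge> 1"
  unfolding corners_def shifted_parts_def by auto

lemma noncorner_zero:
  fixes lam :: "nat list"
  assumes s: "sorted_wrt (\<ge>) lam" and i: "i < length lam" "i \<notin> corners lam"
  defines "x \<equiv> \<lambda>k. real (shifted_parts lam k)"
  shows "x (length lam - 1 - i) * VV (length lam) (x(length lam - 1 - i := x (length lam - 1 - i) - 1)) = 0"
proof -
  let ?r = "length lam"
  let ?j = "?r - 1 - i"
  show ?thesis
  proof (cases "Suc i < ?r \<and> lam ! i \<le> lam ! Suc i")
    case True
    then have eq: "lam ! Suc i = lam ! i" using sorted_ge_nth[OF s, of i "Suc i"] by simp
    have si: "Suc i < ?r" using True by simp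
    then have j1: "?j \<ge> 1" by linarith
    let ?a = "?j - 1"
    have a: "?a = ?r - 1 - Suc i" by simp
    have xa: "x ?a = x ?j - 1"
      unfolding x_def shifted_parts_def a using True eq j1 by (simp add: of_nat_diff)
    show ?thesis
      by (rule mult_eq_0_iff[THEN iffD2, OF disjI2], rule VV_zero[of ?a ?j]) (use j1 i xa in auto)
  next
    case False
    have "i = ?r - 1 \<and> lam ! i = 0"
    proof (cases "Suc i < ?r")
      case True
      then have "lam ! Suc i < lam ! i" using False by simp
      then have "i \<in> corners lam" using i True by (auto simp: corners_def)
      then show ?thesis using i by simp
    next
      case False
      then have "i = ?r - 1" using i by simp
      moreover have "lam ! i = 0"
      proof (rule ccontr)
        assume "lam ! i \<noteq> 0"
        then have "i \<in> corners lam" using i False by (auto simp: corners_def)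
        then show False using i by simp
      qed
      ultimately show ?thesis by simp
    qed
    then have "x ?j = 0" unfolding x_def shifted_parts_def by auto
    then show ?thesis by simp
  qed
qed

lemma hlf:
  fixes lam :: "nat list"
  assumes "sorted_wrt (\<ge>) lam"
  shows "real (num_SYT lam) * real (hook_product lam) = fact (psize lam)"
  using assms
proof (induction "psize lam" arbitrary: lam rule: less_induct)
  case less
  note s = less.prems
  show ?case
  proof (cases "psize lam = 0")
    case True
    then show ?thesis by (simp add: num_SYT_def SYT_empty hook_empty)
  next
    case False
    let ?n = "psize lam"
    let ?r = "length lam"
    define x where "x = (\<lambda>k. real (shifted_parts lam k))"
    define P where "P = (\<Prod>k<?r. (fact (shifted_parts lam k) :: real))"
    define V where "V = VV ?r x"
    define g where "g = (\<lambda>j. x j * VV ?r (x(j := x j - 1)))"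
    have inj: "inj_on x {..<?r}" unfolding x_def by (rule inj_shift[OF s])
    have hv: "real (hook_product lam) * V = P" unfolding V_def P_def x_def by (rule hook_vdm[OF s])
    have V0: "V \<noteq> 0" unfolding V_def by (rule VV_nonzero[OF inj])
    have trm: "real (num_SYT (decr lam i)) * P = fact (?n - 1) * g (?r - 1 - i)" if i: "i \<in> corners lam" for i
    proof -
      let ?l = "decr lam i"
      let ?j = "?r - 1 - i"
      have ir: "i < ?r" using i by (simp add: corners_def)
      have jr: "?j < ?r" using ir by simp
      have len: "length ?l = ?r" by (simp add: decr_def)
      have sl: "sorted_wrt (\<ge>) ?l" by (rule sorted_decr[OF s i])
      have pl: "psize ?l = ?n - 1" by (rule psize_decr[OF i])
      have IH: "real (num_SYT ?l) * real (hook_product ?l) = fact (?n - 1)"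
        using less.hyps[OF _ sl] pl False by simp
      have hvl: "real (hook_product ?l) * VV ?r (\<lambda>k. real (shifted_parts ?l k))
                 = (\<Prod>k<?r. fact (shifted_parts ?l k))"
        using hook_vdm[OF sl] unfolding len .
      have pos: "shifted_parts lam ?j \<ge> 1" by (rule shifted_corner_pos[OF i])
      have Vl: "VV ?r (\<lambda>k. real (shifted_parts ?l k)) = VV ?r (x(?j := x ?j - 1))"
      proof (rule VV_cong)
        fix k assume "k < ?r"
        then show "real (shifted_parts ?l k) = (x(?j := x ?j - 1)) k"
          using shifted_decr[OF i] pos unfolding x_def by (auto simp: of_nat_diff)
      qed
      have Pl: "(\<Prod>k<?r. (fact (shifted_parts ?l k) :: real)) * x ?j = P"
      proof -
        have "(\<Prod>k<?r. (fact (shifted_parts ?l k) :: real))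
             = fact (shifted_parts ?l ?j) * (\<Prod>k\<in>{..<?r}-{?j}. fact (shifted_parts ?l k))"
          using jr by (subst prod.remove[of _ ?j]) auto
        also have "(\<Prod>k\<in>{..<?r}-{?j}. (fact (shifted_parts ?l k) :: real)) = (\<Prod>k\<in>{..<?r}-{?j}. fact (shifted_parts lam k))"
          by (intro prod.cong refl) (simp add: shifted_decr[OF i])
        also have "shifted_parts ?l ?j = shifted_parts lam ?j - 1" using shifted_decr[OF i jr] by simp
        finally have a: "(\<Prod>k<?r. (fact (shifted_parts ?l k) :: real))
             = fact (shifted_parts lam ?j - 1) * (\<Prod>k\<in>{..<?r}-{?j}. fact (shifted_parts lam k))" .
        have b: "P = fact (shifted_parts lam ?j) * (\<Prod>k\<in>{..<?r}-{?j}. fact (shifted_parts lam k))"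
          unfolding P_def using jr by (subst prod.remove[of _ ?j]) auto
        have c: "(fact (shifted_parts lam ?j) :: real) = x ?j * fact (shifted_parts lam ?j - 1)"
          unfolding x_def using pos by (simp add: fact_reduce)
        show ?thesis unfolding a b c by (simp add: ac_simps)
      qed
      have "real (num_SYT ?l) * P = real (num_SYT ?l) * (real (hook_product ?l) * VV ?r (x(?j := x ?j - 1))) * x ?j"
        unfolding Pl[symmetric] hvl[symmetric] Vl by (simp add: ac_simps)
      also have "\<dots> = fact (?n - 1) * g ?j"
        unfolding g_def using IH by (simp add: ac_simps)
      finally show ?thesis .
    qed
    have sumg: "(\<Sum>i\<in>corners lam. g (?r - 1 - i)) = real ?n * V"
    proof -
      have "(\<Sum>i\<in>corners lam. g (?r - 1 - i)) = (\<Sum>i<?r. g (?r - 1 - i))"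
      proof (rule sum.mono_neutral_left)
        show "corners lam \<subseteq> {..<?r}" by (auto simp: corners_def)
        show "\<forall>i\<in>{..<?r} - corners lam. g (?r - 1 - i) = 0"
          unfolding g_def x_def using noncorner_zero[OF s] by auto
      qed simp
      also have "\<dots> = (\<Sum>j<?r. g j)" by (rule sum_reflect)
      also have "\<dots> = (sum x {..<?r} - real ?r * (real ?r - 1) / 2) * V"
        unfolding g_def V_def by (rule VV_key[OF inj])
      also have "sum x {..<?r} - real ?r * (real ?r - 1) / 2 = real ?n"
        unfolding x_def by (rule sum_shift)
      finally show ?thesis .
    qed
    have "real (num_SYT lam) * P = (\<Sum>i\<in>corners lam. real (num_SYT (decr lam i)) * P)"
    proof -
      have "card (SYT lam) = (\<Sum>i\<in>corners lam. card (SYT (decr lam i)))"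
        using card_SYT_rec[OF s] False by simp
      then show ?thesis unfolding num_SYT_def by (simp add: sum_distrib_right)
    qed
    also have "\<dots> = (\<Sum>i\<in>corners lam. fact (?n - 1) * g (?r - 1 - i))"
      by (intro sum.cong refl) (rule trm)
    also have "\<dots> = fact (?n - 1) * (real ?n * V)"
      unfolding sum_distrib_left[symmetric] sumg ..
    also have "\<dots> = fact ?n * V"
      using False by (simp add: fact_reduce[of ?n])
    finally have "real (num_SYT lam) * P = fact ?n * V" .
    then have "(real (num_SYT lam) * real (hook_product lam)) * V = fact ?n * V"
      unfolding hv[symmetric] by (simp add: ac_simps)
    then show ?thesis using V0 by simp
  qed
qed


lemma phi_h_deriv:
  assumes "appell A"
  shows "pderiv (phi_h A m) = phi_h A (m - 1)"
proof -
  have A0: "A 0 = 1" and Ad: "\<And>n. n \<ge> 1 \<Longrightarrow> pderiv (A n) = smult (real n) (A (n - 1))"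
    using assms by (auto simp: appell_def)
  consider "m < 0" | "m = 0" | "m = 1" | "m > 1" by linarith
  then show ?thesis
  proof cases
    case 1 then show ?thesis by (simp add: phi_h_def)
  next
    case 2 then show ?thesis by (simp add: phi_h_def)
  next
    case 3
    have "pderiv (A 1) = A 0" using Ad[of 1] by simp
    then show ?thesis using 3 A0 by (simp add: phi_h_def pderiv_smult)
  next
    case 4
    define k where "k = nat m"
    have k: "m = int k" "k \<ge> 2" using 4 unfolding k_def by auto
    have nm: "nat (m - 1) = k - 1" using k by simp
    have "pderiv (smult (1 / fact k) (A k)) = smult (1 / fact k * real k) (A (k - 1))"
      using Ad[of k] k by (simp add: pderiv_smult)
    also have "1 / fact k * real k = (1 / fact (k - 1) :: real)"
      using k by (simp add: fact_reduce[of k] field_simps)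
    finally show ?thesis using k 4 nm by (simp add: phi_h_def)
  qed
qed

lemma deriv_A:
  assumes "appell A"
  shows "(pderiv ^^ i) (A n) = smult (fact n) (phi_h A (int n - int i))"
proof (induction i)
  case 0
  have "A 0 = 1" using assms by (simp add: appell_def)
  then show ?case by (cases "n = 0") (auto simp: phi_h_def)
next
  case (Suc i)
  have "(pderiv ^^ Suc i) (A n) = pderiv ((pderiv ^^ i) (A n))" by simp
  also have "\<dots> = smult (fact n) (phi_h A (int n - int i - 1))"
    unfolding Suc by (simp add: pderiv_smult phi_h_deriv[OF assms])
  finally show ?case by (simp add: algebra_simps)
qed

lemma det_scale_cols:
  fixes c :: "nat \<Rightarrow> 'a::comm_ring_1"
  shows "det (mat r r (\<lambda>(i, j). c j * B i j)) = (\<Prod>j<r. c j) * det (mat r r (\<lambda>(i, j). B i j))"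
proof -
  have M1: "mat r r (\<lambda>(i, j). c j * B i j) \<in> carrier_mat r r" by simp
  have M2: "mat r r (\<lambda>(i, j). B i j) \<in> carrier_mat r r" by simp
  show ?thesis
    unfolding det_def'[OF M1] det_def'[OF M2] sum_distrib_left
  proof (intro sum.cong refl)
    fix p assume p: "p \<in> {p. p permutes {0..<r}}"
    then have pp: "p permutes {0..<r}" by simp
    have "(\<Prod>i = 0..<r. mat r r (\<lambda>(i, j). c j * B i j) $$ (i, p i)) = (\<Prod>i = 0..<r. c (p i) * B i (p i))"
      using pp by (intro prod.cong refl) (auto simp: permutes_in_image)
    also have "\<dots> = (\<Prod>i = 0..<r. c (p i)) * (\<Prod>i = 0..<r. B i (p i))"
      by (rule prod.distrib)
    also have "(\<Prod>i = 0..<r. c (p i)) = (\<Prod>i = 0..<r. c i)"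
      using prod.permute[OF pp, of c] by (simp add: comp_def)
    also have "(\<Prod>i = 0..<r. B i (p i)) = (\<Prod>i = 0..<r. mat r r (\<lambda>(i, j). B i j) $$ (i, p i))"
      using pp by (intro prod.cong refl) (auto simp: permutes_in_image)
    finally show "signof p * (\<Prod>i = 0..<r. mat r r (\<lambda>(i, j). c j * B i j) $$ (i, p i)) =
         (\<Prod>j<r. c j) * (signof p * (\<Prod>i = 0..<r. mat r r (\<lambda>(i, j). B i j) $$ (i, p i)))"
      by (simp add: atLeast0LessThan ac_simps)
  qed
qed

definition revp :: "nat \<Rightarrow> nat \<Rightarrow> nat" where
  "revp r i = (if i < r then r - 1 - i else i)"

lemma revp_permutes: "revp r permutes {0..<r}"
proof (rule bij_imp_permutes)
  show "bij_betw (revp r) {0..<r} {0..<r}"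
    by (rule bij_betw_byWitness[where f' = "revp r"]) (auto simp: revp_def)
  show "\<And>x. x \<notin> {0..<r} \<Longrightarrow> revp r x = x" by (simp add: revp_def)
qed

lemma det_reverse:
  fixes f :: "nat \<Rightarrow> nat \<Rightarrow> 'a::comm_ring_1"
  shows "det (mat r r (\<lambda>(i, j). f (r - 1 - j) (r - 1 - i))) = det (mat r r (\<lambda>(i, j). f i j))"
proof -
  let ?F = "mat r r (\<lambda>(i, j). f i j)"
  let ?R = "revp r"
  have pR: "?R permutes {0..<r}" by (rule revp_permutes)
  let ?G1 = "mat r r (\<lambda>(i, j). ?F $$ (?R i, j))"
  have d1: "det ?G1 = signof ?R * det ?F" by (rule det_permute_rows[OF _ pR]) simp
  let ?G2 = "transpose_mat ?G1"
  have d2: "det ?G2 = det ?G1" by (rule det_transpose[of _ r]) simp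
  let ?G3 = "mat r r (\<lambda>(i, j). ?G2 $$ (?R i, j))"
  have d3: "det ?G3 = signof ?R * det ?G2" by (rule det_permute_rows[OF _ pR]) simp
  have eq: "?G3 = mat r r (\<lambda>(i, j). f (r - 1 - j) (r - 1 - i))"
    by (rule eq_matI) (auto simp: revp_def)
  have ss: "(signof ?R :: 'a) * signof ?R = 1"
    by (simp add: of_int_mult[symmetric])
  have "det (mat r r (\<lambda>(i, j). f (r - 1 - j) (r - 1 - i))) = signof ?R * signof ?R * det ?F"
    unfolding eq[symmetric] d3 d2 d1 by (simp add: ac_simps)
  then show ?thesis unfolding ss by simp
qed

lemma prod_const_poly: "(\<Prod>j\<in>S. [:c j:]) = [:\<Prod>j\<in>S. c j:]"
  by (induction S rule: infinite_finite_induct) (simp_all add: ac_simps)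

lemma wronskian_phi:
  assumes "appell A"
  shows "wronskian (length lam) (\<lambda>j. A (shifted_parts lam j))
    = smult (\<Prod>j<length lam. fact (shifted_parts lam j)) (phi_schur A lam)"
proof -
  let ?r = "length lam"
  let ?n = "shifted_parts lam"
  define f where "f = (\<lambda>a b. phi_h A (int (lam ! a) - int a + int b))"
  have "wronskian ?r (\<lambda>j. A (?n j)) = det (mat ?r ?r (\<lambda>(i, j). [:fact (?n j):] * f (?r - 1 - j) (?r - 1 - i)))"
    unfolding wronskian_def
  proof (rule arg_cong[where f = det], rule eq_matI)
    fix i j assume ij: "i < dim_row (mat ?r ?r (\<lambda>(i, j). [:fact (?n j):] * f (?r - 1 - j) (?r - 1 - i)))"
      "j < dim_col (mat ?r ?r (\<lambda>(i, j). [:fact (?n j):] * f (?r - 1 - j) (?r - 1 - i)))"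
    then have i: "i < ?r" and j: "j < ?r" by auto
    have "int (?n j) - int i = int (lam ! (?r - 1 - j)) - int (?r - 1 - j) + int (?r - 1 - i)"
      unfolding shifted_parts_def using i j by simp
    then show "mat ?r ?r (\<lambda>(i, j). (pderiv ^^ i) (A (?n j))) $$ (i, j) =
          mat ?r ?r (\<lambda>(i, j). [:fact (?n j):] * f (?r - 1 - j) (?r - 1 - i)) $$ (i, j)"
      using i j by (simp add: deriv_A[OF assms] f_def algebra_simps)
  qed simp_all
  also have "\<dots> = (\<Prod>j<?r. [:fact (?n j):]) * det (mat ?r ?r (\<lambda>(i, j). f (?r - 1 - j) (?r - 1 - i)))"
    by (rule det_scale_cols)
  also have "det (mat ?r ?r (\<lambda>(i, j). f (?r - 1 - j) (?r - 1 - i))) = det (mat ?r ?r (\<lambda>(i, j). f i j))"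
    by (rule det_reverse)
  also have "det (mat ?r ?r (\<lambda>(i, j). f i j)) = phi_schur A lam"
    unfolding phi_schur_def f_def ..
  finally show ?thesis by (simp add: prod_const_poly)
qed

theorem theorem4p1:
  fixes A :: "nat \<Rightarrow> real poly" and lam :: "nat list"
  assumes "appell A" and "partition lam"
  shows "phi_schur A lam = smult (1 / real (hook_product lam)) (wronskian_appell A lam)
       \<and> phi_schur A lam = smult (real (num_SYT lam) / fact (psize lam)) (wronskian_appell A lam)"
proof -
  have s: "sorted_wrt (\<ge>) lam" using assms(2) by (simp add: partition_def)
  let ?r = "length lam"
  let ?n = "shifted_parts lam"
  define P where "P = (\<Prod>j<?r. (fact (?n j) :: real))"
  define V where "V = VV ?r (\<lambda>k. real (?n k))"
  define H where "H = real (hook_product lam)"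
  have hv: "H * V = P" unfolding H_def V_def P_def by (rule hook_vdm[OF s])
  have P0: "P \<noteq> 0" unfolding P_def by (intro prod_pos[THEN less_imp_neq, symmetric]) auto
  have V0: "V \<noteq> 0" unfolding V_def by (rule VV_nonzero[OF inj_shift[OF s]])
  have H0: "H \<noteq> 0" using hv P0 by auto
  have W: "wronskian_appell A lam = smult H (phi_schur A lam)"
  proof -
    have "wronskian_appell A lam = smult (1 / V) (smult P (phi_schur A lam))"
      unfolding wronskian_appell_def wronskian_phi[OF assms(1)] vandermonde_VV V_def P_def ..
    also have "\<dots> = smult (P / V) (phi_schur A lam)" by simp
    also have "P / V = H" using hv V0 by (simp add: field_simps)
    finally show ?thesis .
  qed
  have hl: "real (num_SYT lam) * H = fact (psize lam)" unfolding H_def by (rule hlf[OF s])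
  have c1: "smult (1 / H) (wronskian_appell A lam) = phi_schur A lam"
    unfolding W using H0 by simp
  have c2: "smult (real (num_SYT lam) / fact (psize lam)) (wronskian_appell A lam) = phi_schur A lam"
  proof -
    have f0: "(fact (psize lam) :: real) \<noteq> 0" by simp
    have "real (num_SYT lam) / fact (psize lam) * H = (real (num_SYT lam) * H) / fact (psize lam)"
      by simp
    also have "\<dots> = 1" unfolding hl using f0 by simp
    finally have e: "real (num_SYT lam) / fact (psize lam) * H = 1" .
    show ?thesis unfolding W smult_smult e by simp
  qed
  show ?thesis using c1 c2 unfolding H_def by simp
qed

end
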